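(* Let $r\ge 1$ and $\mathbf{s}\in\mathbb{Z}^r$. Suppose $\boldsymbol{\lambda},\boldsymbol{\mu}\in\Lambda^{(r)}$ satisfy $(\boldsymbol{\lambda},\mathbf{s})\approx_e(\boldsymbol{\mu},\mathbf{s})$. Then $\Psi_r(\boldsymbol{\lambda},\mathbf{s})\approx_e\Psi_r(\boldsymbol{\mu},\mathbf{s})$ in $\mathcal{A}_e$.
   Context: Fix an integer $e\ge 2$. A partition is a weakly decreasing sequence $\lambda=(\lambda_1,\lambda_2,\dots)$ of non-negative integers with finite sum $|\lambda|$; $\Lambda$ denotes the set of partitions and $\Lambda^{(m)}$ the set of $m$-multipartitions, i.e. $m$-tuples $\boldsymbol\lambda=(\lambda^{(1)},\dots,\lambda^{(m)})$ of partitions, with $|\boldsymbol\lambda|=\sum_k|\lambda^{(k)}|$. A $\beta$-set is a subset $B\subseteq\mathbb{Z}$ containing all sufficiently small integers and no sufficiently large ones. For $\lambda\in\Lambda$ and $s\in\mathbb{Z}$ set $B_s(\lambda)=\{\lambda_i-i+s : i\ge 1\}$; every $\beta$-set equals $B_s(\lambda)$ for a unique pair $(\lambda,s)$. For $N\ge 2$ let $\mathcal{A}_N=\Lambda\times\mathbb{Z}$ (abacus configurations with $N$ runners: a bead at each position $b\in B_s(\lambda)$, position $b=aN+i$, $0\le i<N$, lying on runner $i$) and $\mathcal{A}_N^m=\Lambda^{(m)}\times\mathbb{Z}^m$, where $(\boldsymbol\lambda,\mathbf{s})$ is identified with the $m$-tuple of $\beta$-sets $(B_{s_1}(\lambda^{(1)}),\dots,B_{s_m}(\lambda^{(m)}))$.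 Blocks: for $(\boldsymbol\lambda,\mathbf{s})\in\mathcal{A}_N^m$, its $N$-residue multiset is the multiset of the values $s_k+y-x \bmod N$ over all nodes $(x,y,k)$ with $x\ge1$, $1\le y\le\lambda^{(k)}_x$, $1\le k\le m$. Define $(\boldsymbol\lambda,\mathbf{s})\approx_N(\boldsymbol\mu,\mathbf{s}')$ iff $\mathbf{s}=\mathbf{s}'$, $|\boldsymbol\lambda|=|\boldsymbol\mu|$ and the $N$-residue multisets coincide. Its equivalence classes are called blocks. (For $N=e$ these are exactly the sets of multipartitions indexing Specht modules in a common block of the Ariki–Koike algebra $\mathcal{H}_{m,n}(q,(q^{s_1},\dots,q^{s_m}))$, $q$ a primitive $e$-th root of unity.) Uglov's map: for $1\le k\le r$ define $\psi_k:\mathbb{Z}\to\mathbb{Z}$ by $\psi_k(ae+i)=((a+1)r-k)e+i$ for $a\in\mathbb{Z}$, $0\le i<e$. For $(\boldsymbol\lambda,\mathbf{s})\in\mathcal{A}_e^r$ the set $B=\bigsqcup_{k=1}^r\psi_k(B_{s_k}(\lambda^{(k)}))$ is a $\beta$-set, and $\Psi_r(\boldsymbol\lambda,\mathbf{s})$ is the unique $(\tilde\lambda,\tilde s)\in\mathcal{A}_e$ with $B_{\tilde s}(\tilde\lambda)=B$. $\Psi_r:\mathcal{A}_e^r\to\mathcal{A}_e$ is a bijection; $\Phi_r=\Psi_r^{-1}$. *)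

theory Defs
  imports Main "HOL-Library.Multiset"
begin

text \<open>Partitions are functions nat => nat, 0-indexed: la i is the part lambda_(i+1).
  Multipartitions with m components are functions nat => (nat => nat), components k < m
  (0-indexed: lam k is lambda^(k+1)); charges are s :: nat => int with s k = s_(k+1).\<close>

definition is_partition :: "(nat \<Rightarrow> nat) \<Rightarrow> bool" where
  "is_partition la \<longleftrightarrow> (\<forall>i j. i \<le> j \<longrightarrow> la j \<le> la i) \<and> finite {i. la i \<noteq> 0}"

definition is_multipartition :: "nat \<Rightarrow> (nat \<Rightarrow> nat \<Rightarrow> nat) \<Rightarrow> bool" where
  "is_multipartition m lam \<longleftrightarrow> (\<forall>k<m. is_partition (lam k))"

definition part_size :: "(nat \<Rightarrow> nat) \<Rightarrow> nat" where
  "part_size la = (\<Sum>i\<in>{i. la i \<noteq> 0}. la i)"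

definition multi_size :: "nat \<Rightarrow> (nat \<Rightarrow> nat \<Rightarrow> nat) \<Rightarrow> nat" where
  "multi_size m lam = (\<Sum>k<m. part_size (lam k))"

definition beta_set :: "int \<Rightarrow> (nat \<Rightarrow> nat) \<Rightarrow> int set" where
  "beta_set s la = {int (la j) - int (j + 1) + s | j. True}"

definition nodes :: "nat \<Rightarrow> (nat \<Rightarrow> nat \<Rightarrow> nat) \<Rightarrow> (nat \<times> nat \<times> nat) set" where
  "nodes m lam = {(x, y, k). k < m \<and> 1 \<le> x \<and> 1 \<le> y \<and> y \<le> lam k (x - 1)}"

definition residues :: "nat \<Rightarrow> nat \<Rightarrow> (nat \<Rightarrow> nat \<Rightarrow> nat) \<Rightarrow> (nat \<Rightarrow> int) \<Rightarrow> int multiset" where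
  "residues N m lam s =
     image_mset (\<lambda>(x, y, k). (s k + int y - int x) mod int N) (mset_set (nodes m lam))"

definition block_equiv ::
  "nat \<Rightarrow> nat \<Rightarrow> (nat \<Rightarrow> nat \<Rightarrow> nat) \<times> (nat \<Rightarrow> int) \<Rightarrow> (nat \<Rightarrow> nat \<Rightarrow> nat) \<times> (nat \<Rightarrow> int) \<Rightarrow> bool" where
  "block_equiv N m A B \<longleftrightarrow>
     (case A of (lam, s) \<Rightarrow> case B of (mu, s') \<Rightarrow>
        is_multipartition m lam \<and> is_multipartition m mu \<and>
        (\<forall>k<m. s k = s' k) \<and>
        multi_size m lam = multi_size m mu \<and>
        residues N m lam s = residues N m mu s)"

text \<open>psi_k(a e + i) = ((a+1) r - k) e + i, for 1 <= k <= r, 0 <= i < e.\<close>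
definition uglov_psi :: "nat \<Rightarrow> nat \<Rightarrow> nat \<Rightarrow> int \<Rightarrow> int" where
  "uglov_psi e r k b = ((b div int e + 1) * int r - int k) * int e + b mod int e"

definition uglov_beta :: "nat \<Rightarrow> nat \<Rightarrow> (nat \<Rightarrow> nat \<Rightarrow> nat) \<Rightarrow> (nat \<Rightarrow> int) \<Rightarrow> int set" where
  "uglov_beta e r lam s = (\<Union>k<r. uglov_psi e r (k + 1) ` beta_set (s k) (lam k))"

definition uglov_Psi :: "nat \<Rightarrow> nat \<Rightarrow> (nat \<Rightarrow> nat \<Rightarrow> nat) \<Rightarrow> (nat \<Rightarrow> int) \<Rightarrow> (nat \<Rightarrow> nat) \<times> int" where
  "uglov_Psi e r lam s =
     (THE p. is_partition (fst p) \<and> beta_set (snd p) (fst p) = uglov_beta e r lam s)"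

text \<open>A_e is identified with A_e^1.\<close>
definition as_single :: "(nat \<Rightarrow> nat) \<times> int \<Rightarrow> (nat \<Rightarrow> nat \<Rightarrow> nat) \<times> (nat \<Rightarrow> int)" where
  "as_single p = ((\<lambda>_. fst p), (\<lambda>_. snd p))"

end

theory Submission
  imports Defs
begin


lemma div_step:
  fixes n e :: int assumes "e > 0"
  shows "(n+1) div e = n div e + (if (n+1) mod e = 0 then 1 else 0)"
proof -
  define m where "m = n mod e"
  have m: "0 \<le> m" "m < e" using assms by (auto simp: m_def)
  have d: "n + 1 = (m+1) + (n div e) * e" unfolding m_def
    by (metis add.commute add.left_commute mod_div_mult_eq)
  have dv: "(n+1) div e = n div e + (m+1) div e"
    using d assms by (metis add.commute div_mult_self1 less_irrefl)
  have md: "(n+1) mod e = (m+1) mod e"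
    using d by (metis mod_mult_self1)
  show ?thesis
  proof (cases "m + 1 = e")
    case True
    then show ?thesis using dv md assms by simp
  next
    case False
    then have "m + 1 < e" using m by linarith
    then have "(m+1) div e = 0" "(m+1) mod e = m + 1" using m by simp_all
    then show ?thesis using dv md m by simp
  qed
qed

lemma rowcnt:
  fixes e :: nat and A v :: int
  assumes "e > 0" "0 \<le> v" "v < int e"
  shows "int (card {y::nat. 1 \<le> y \<and> y \<le> L \<and> (A + int y) mod int e = v})
         = (A + int L - v) div int e - (A - v) div int e"
proof (induction L)
  case 0
  have "{y::nat. 1 \<le> y \<and> y \<le> 0 \<and> (A + int y) mod int e = v} = {}" by auto
  then show ?case by simp
next
  case (Suc L)
  let ?P = "\<lambda>y::nat. (A + int y) mod int e = v"
  have eq: "{y::nat. 1 \<le> y \<and> y \<le> Suc L \<and> ?P y}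
      = {y::nat. 1 \<le> y \<and> y \<le> L \<and> ?P y} \<union> (if ?P (Suc L) then {Suc L} else {})"
    by (auto simp: le_Suc_eq)
  have fin: "finite {y::nat. 1 \<le> y \<and> y \<le> L \<and> ?P y}" by (rule finite_subset[of _ "{..L}"]) auto
  have c: "card {y::nat. 1 \<le> y \<and> y \<le> Suc L \<and> ?P y}
       = card {y::nat. 1 \<le> y \<and> y \<le> L \<and> ?P y} + (if ?P (Suc L) then 1 else 0)"
    unfolding eq using fin by auto
  have ds: "(A + int L - v + 1) div int e = (A + int L - v) div int e + (if (A + int L - v + 1) mod int e = 0 then 1 else 0)"
    using div_step[of "int e" "A + int L - v"] assms by simp
  have iff: "(A + int L - v + 1) mod int e = 0 \<longleftrightarrow> ?P (Suc L)"
  proof -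
    have "(A + int L - v + 1) mod int e = 0 \<longleftrightarrow> (A + int (Suc L)) mod int e = v mod int e"
      by (simp add: mod_eq_dvd_iff algebra_simps flip: dvd_eq_mod_eq_0)
    also have "v mod int e = v" using assms by simp
    finally show ?thesis .
  qed
  show ?case using c ds iff Suc.IH by (simp add: algebra_simps)
qed

definition bead :: "int \<Rightarrow> (nat \<Rightarrow> nat) \<Rightarrow> nat \<Rightarrow> int" where
  "bead t la j = int (la j) - int (j+1) + t"

lemma beta_set_bead: "beta_set t la = range (bead t la)"
  by (auto simp: beta_set_def bead_def)

lemma part_bound: assumes "is_partition la" shows "\<exists>X. \<forall>x\<ge>X. la x = 0"
proof -
  have "finite {i. la i \<noteq> 0}" using assms by (simp add: is_partition_def)
  then obtain X where "\<forall>n\<in>{i. la i \<noteq> 0}. n < X" by (auto simp: finite_nat_set_iff_bounded)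
  then have "\<forall>x\<ge>X. la x = 0" by (meson leD mem_Collect_eq)
  then show ?thesis by blast
qed

lemma bead_strict: assumes "is_partition la" "x < y" shows "bead t la y < bead t la x"
proof -
  have "la y \<le> la x" using assms by (simp add: is_partition_def)
  then show ?thesis using assms(2) by (simp add: bead_def)
qed

lemma bead_inj: assumes "is_partition la" shows "inj (bead t la)"
  by (metis assms bead_strict injI less_irrefl nat_neq_iff)

lemma beta_low: assumes "\<forall>x\<ge>X. la x = 0" "z < t - int X" shows "z \<in> beta_set t la"
proof -
  define j where "j = nat (t - 1 - z)"
  have "j \<ge> X" using assms(2) by (simp add: j_def)
  then have "la j = 0" using assms(1) by simp
  then have "bead t la j = z" using assms(2) by (simp add: bead_def j_def)
  then show ?thesis by (metis beta_set_bead rangeI)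
qed

lemma beta_upper:
  assumes "is_partition la" "\<forall>x\<ge>X. la x = 0" "M \<le> t - int X"
  shows "{b \<in> beta_set t la. M \<le> b} = bead t la ` {..<X} \<union> {M..<t - int X}"
proof
  show "{b \<in> beta_set t la. M \<le> b} \<subseteq> bead t la ` {..<X} \<union> {M..<t - int X}"
  proof
    fix b assume b: "b \<in> {b \<in> beta_set t la. M \<le> b}"
    then obtain j where j: "b = bead t la j" by (auto simp: beta_set_bead)
    show "b \<in> bead t la ` {..<X} \<union> {M..<t - int X}"
    proof (cases "j < X")
      case True then show ?thesis using j by auto
    next
      case False
      then have "la j = 0" using assms(2) by simp
      then have "b = t - int j - 1" using j by (simp add: bead_def)
      then show ?thesis using False b by auto
    qed
  qed
next
  show "bead t la ` {..<X} \<union> {M..<t - int X} \<subseteq> {b \<in> beta_set t la. M \<le> b}"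
  proof
    fix b assume "b \<in> bead t la ` {..<X} \<union> {M..<t - int X}"
    then show "b \<in> {b \<in> beta_set t la. M \<le> b}"
    proof
      assume "b \<in> bead t la ` {..<X}"
      then obtain j where "j < X" "b = bead t la j" by auto
      then show ?thesis using assms(3) by (auto simp: bead_def beta_set_bead)
    next
      assume "b \<in> {M..<t - int X}"
      then show ?thesis using beta_low[OF assms(2)] by auto
    qed
  qed
qed

lemma sum_upper:
  fixes g :: "int \<Rightarrow> int"
  assumes "is_partition la" "\<forall>x\<ge>X. la x = 0" "M \<le> t - int X"
  shows "finite {b \<in> beta_set t la. M \<le> b}"
    "(\<Sum>b\<in>{b \<in> beta_set t la. M \<le> b}. g b) = (\<Sum>x<X. g (bead t la x)) + (\<Sum>b\<in>{M..<t - int X}. g b)"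
proof -
  have disj: "bead t la ` {..<X} \<inter> {M..<t - int X} = {}"
    by (auto simp: bead_def)
  show "finite {b \<in> beta_set t la. M \<le> b}" unfolding beta_upper[OF assms] by simp
  have "(\<Sum>b\<in>{b \<in> beta_set t la. M \<le> b}. g b) = (\<Sum>b\<in>bead t la ` {..<X}. g b) + (\<Sum>b\<in>{M..<t - int X}. g b)"
    unfolding beta_upper[OF assms] by (rule sum.union_disjoint) (use disj in auto)
  also have "(\<Sum>b\<in>bead t la ` {..<X}. g b) = (\<Sum>x<X. g (bead t la x))"
    by (rule sum.reindex_cong[OF inj_on_subset[OF bead_inj[OF assms(1)]]]) auto
  finally show "(\<Sum>b\<in>{b \<in> beta_set t la. M \<le> b}. g b) = (\<Sum>x<X. g (bead t la x)) + (\<Sum>b\<in>{M..<t - int X}. g b)" .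
qed

lemma sum_ref:
  fixes g :: "int \<Rightarrow> int"
  assumes "M \<le> t - int X"
  shows "(\<Sum>b\<in>{M..<t}. g b) = (\<Sum>x<X. g (t - int x - 1)) + (\<Sum>b\<in>{M..<t - int X}. g b)"
proof -
  have u: "{M..<t} = {t - int X..<t} \<union> {M..<t - int X}" using assms by auto
  have im: "(\<lambda>x. t - int x - 1) ` {..<X} = {t - int X..<t}"
  proof
    show "(\<lambda>x. t - int x - 1) ` {..<X} \<subseteq> {t - int X..<t}" by auto
    show "{t - int X..<t} \<subseteq> (\<lambda>x. t - int x - 1) ` {..<X}"
    proof
      fix b assume b: "b \<in> {t - int X..<t}"
      then have "b = t - int (nat (t - 1 - b)) - 1" "nat (t - 1 - b) < X" by auto
      then show "b \<in> (\<lambda>x. t - int x - 1) ` {..<X}" by blast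
    qed
  qed
  have "(\<Sum>b\<in>{M..<t}. g b) = (\<Sum>b\<in>{t - int X..<t}. g b) + (\<Sum>b\<in>{M..<t - int X}. g b)"
    unfolding u by (rule sum.union_disjoint) auto
  also have "(\<Sum>b\<in>{t - int X..<t}. g b) = (\<Sum>x<X. g (t - int x - 1))"
    unfolding im[symmetric] by (rule sum.reindex_cong[where l="\<lambda>x. t - int x - 1"]) (auto simp: inj_on_def)
  finally show ?thesis .
qed

lemma card_upper:
  assumes "is_partition la" "\<forall>x\<ge>X. la x = 0" "M \<le> t - int X"
  shows "int (card {b \<in> beta_set t la. M \<le> b}) = t - M"
proof -
  have "int (card {b \<in> beta_set t la. M \<le> b}) = (\<Sum>b\<in>{b \<in> beta_set t la. M \<le> b}. (1::int))" by simp
  also have "\<dots> = (\<Sum>x<X. 1) + (\<Sum>b\<in>{M..<t - int X}. (1::int))" by (rule sum_upper[OF assms])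
  also have "\<dots> = t - M" using assms(3) by simp
  finally show ?thesis .
qed

lemma nodes_count:
  assumes "\<forall>k<m. \<forall>x\<ge>X. lam k x = 0"
  shows "card {n \<in> nodes m lam. P n} = (\<Sum>k<m. \<Sum>x<X. card {y. 1 \<le> y \<and> y \<le> lam k x \<and> P (x+1, y, k)})"
    "finite {n \<in> nodes m lam. P n}"
proof -
  define Y where "Y = (\<lambda>kx::nat\<times>nat. {y. 1 \<le> y \<and> y \<le> lam (fst kx) (snd kx) \<and> P (snd kx + 1, y, fst kx)})"
  define f where "f = (\<lambda>(kx::nat\<times>nat, y::nat). (snd kx + 1, y, fst kx))"
  have eq: "{n \<in> nodes m lam. P n} = f ` (SIGMA kx:{..<m}\<times>{..<X}. Y kx)"
  proof
    show "{n \<in> nodes m lam. P n} \<subseteq> f ` (SIGMA kx:{..<m}\<times>{..<X}. Y kx)"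
    proof
      fix n assume n: "n \<in> {n \<in> nodes m lam. P n}"
      then obtain x y k where xyk: "n = (x, y, k)" "k < m" "1 \<le> x" "1 \<le> y" "y \<le> lam k (x - 1)" "P (x,y,k)"
        by (auto simp: nodes_def)
      then have "lam k (x - 1) \<noteq> 0" by auto
      then have "x - 1 < X" using assms xyk(2) by (meson not_le)
      then have "((k, x - 1), y) \<in> (SIGMA kx:{..<m}\<times>{..<X}. Y kx)" using xyk by (auto simp: Y_def)
      moreover have "f ((k, x - 1), y) = n" using xyk by (simp add: f_def)
      ultimately show "n \<in> f ` (SIGMA kx:{..<m}\<times>{..<X}. Y kx)" by (metis imageI)
    qed
    show "f ` (SIGMA kx:{..<m}\<times>{..<X}. Y kx) \<subseteq> {n \<in> nodes m lam. P n}"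
      by (auto simp: f_def Y_def nodes_def)
  qed
  have inj: "inj_on f (SIGMA kx:{..<m}\<times>{..<X}. Y kx)" by (auto simp: inj_on_def f_def)
  have finY: "\<And>kx. finite (Y kx)" unfolding Y_def by (rule finite_subset[of _ "{..lam _ _}"]) auto
  have "card {n \<in> nodes m lam. P n} = card (SIGMA kx:{..<m}\<times>{..<X}. Y kx)"
    unfolding eq by (rule card_image[OF inj])
  also have "\<dots> = (\<Sum>kx\<in>{..<m}\<times>{..<X}. card (Y kx))" by (rule card_SigmaI) (auto simp: finY)
  also have "\<dots> = (\<Sum>k<m. \<Sum>x<X. card (Y (k,x)))" by (simp add: sum.cartesian_product split_def)
  finally show "card {n \<in> nodes m lam. P n} = (\<Sum>k<m. \<Sum>x<X. card {y. 1 \<le> y \<and> y \<le> lam k x \<and> P (x+1, y, k)})"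
    by (simp add: Y_def)
  show "finite {n \<in> nodes m lam. P n}" unfolding eq using finY by auto
qed

lemma count_res:
  assumes "finite (nodes m lam)"
  shows "count (residues e m lam s) v = card {n \<in> nodes m lam. (case n of (x, y, k) \<Rightarrow> (s k + int y - int x) mod int e) = v}"
proof -
  define f where "f = (\<lambda>n::nat\<times>nat\<times>nat. case n of (x, y, k) \<Rightarrow> (s k + int y - int x) mod int e)"
  have "count (residues e m lam s) v = sum (count (mset_set (nodes m lam))) (f -` {v} \<inter> nodes m lam)"
    unfolding residues_def f_def[symmetric] count_image_mset using assms by simp
  also have "\<dots> = sum (\<lambda>_. 1) (f -` {v} \<inter> nodes m lam)"
    by (rule sum.cong) (use assms in auto)
  also have "\<dots> = card (f -` {v} \<inter> nodes m lam)" by simp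
  also have "f -` {v} \<inter> nodes m lam = {n \<in> nodes m lam. f n = v}" by auto
  finally show ?thesis unfolding f_def .
qed

lemma size_res: "size (residues e m lam s) = card (nodes m lam)"
  by (simp add: residues_def)

lemma dec_rank:
  assumes "is_partition la"
  shows "card {z \<in> beta_set t la. bead t la x < z} = x"
proof -
  have "{z \<in> beta_set t la. bead t la x < z} = bead t la ` {..<x}"
  proof
    show "{z \<in> beta_set t la. bead t la x < z} \<subseteq> bead t la ` {..<x}"
    proof
      fix z assume "z \<in> {z \<in> beta_set t la. bead t la x < z}"
      then obtain y where y: "z = bead t la y" "bead t la x < bead t la y" by (auto simp: beta_set_bead)
      have "y < x"
      proof (rule ccontr)
        assume "\<not> y < x"
        then have "y = x \<or> x < y" by auto
        then show False using y(2) bead_strict[OF assms, of x y t] by auto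
      qed
      then show "z \<in> bead t la ` {..<x}" using y by auto
    qed
    show "bead t la ` {..<x} \<subseteq> {z \<in> beta_set t la. bead t la x < z}"
      using bead_strict[OF assms] by (auto simp: beta_set_bead)
  qed
  then show ?thesis
    by (simp add: card_image inj_on_subset[OF bead_inj[OF assms]])
qed

lemma beta_unique:
  assumes "is_partition la" "is_partition la'" "beta_set t la = beta_set t' la'"
  shows "la = la' \<and> t = t'"
proof -
  obtain X1 where X1: "\<forall>x\<ge>X1. la x = 0" using part_bound[OF assms(1)] by blast
  obtain X2 where X2: "\<forall>x\<ge>X2. la' x = 0" using part_bound[OF assms(2)] by blast
  define M where "M = min t t' - int X1 - int X2"
  have "int (card {b \<in> beta_set t la. M \<le> b}) = t - M"
    by (rule card_upper[OF assms(1) X1]) (simp add: M_def)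
  moreover have "int (card {b \<in> beta_set t' la'. M \<le> b}) = t' - M"
    by (rule card_upper[OF assms(2) X2]) (simp add: M_def)
  ultimately have tt: "t = t'" using assms(3) by simp
  have "la x = la' x" for x
  proof -
    have "bead t la x \<in> beta_set t' la'" using assms(3) by (auto simp: beta_set_bead)
    then obtain y where y: "bead t la x = bead t' la' y" by (auto simp: beta_set_bead)
    have "x = y" using dec_rank[OF assms(1), of t x] dec_rank[OF assms(2), of t' y] y assms(3) by simp
    then show ?thesis using y tt by (simp add: bead_def)
  qed
  then show ?thesis using tt by auto
qed

lemma strict_dec_gap:
  fixes bd :: "nat \<Rightarrow> int"
  assumes "\<And>i j. i < j \<Longrightarrow> bd j < bd i" "i \<le> j"
  shows "bd j + int j \<le> bd i + int i"
  using assms(2)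
proof (induction j rule: dec_induct)
  case base then show ?case by simp
next
  case (step n)
  have "bd (Suc n) < bd n" using assms(1) by simp
  then show ?case using step.IH by simp
qed

lemma beta_exists:
  assumes low: "\<forall>z<M. z \<in> B" and fin: "finite {b \<in> B. M \<le> b}"
  shows "\<exists>la t. is_partition la \<and> beta_set t la = B"
proof -
  define S where "S = {b \<in> B. M \<le> b}"
  define n where "n = card S"
  define xs where "xs = rev (sorted_list_of_set S)"
  have lxs: "length xs = n" by (simp add: xs_def n_def)
  have sxs: "set xs = S" using fin by (simp add: xs_def S_def)
  have srt: "sorted_wrt (>) xs"
    unfolding xs_def sorted_wrt_rev using strict_sorted_list_of_set[of S] by simp
  have nth_dec: "\<And>i j. i < j \<Longrightarrow> j < n \<Longrightarrow> xs ! j < xs ! i"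
    using srt lxs by (simp add: sorted_wrt_iff_nth_less)
  have xsS: "\<And>i. i < n \<Longrightarrow> xs ! i \<in> S" using sxs lxs by (metis nth_mem)
  define bd where "bd = (\<lambda>x. if x < n then xs ! x else M - 1 - int (x - n))"
  define t where "t = M + int n"
  define la where "la = (\<lambda>x. nat (bd x + int x + 1 - t))"
  have bd_dec: "\<And>i j. i < j \<Longrightarrow> bd j < bd i"
  proof -
    fix i j :: nat assume ij: "i < j"
    show "bd j < bd i"
    proof (cases "j < n")
      case True then show ?thesis using ij nth_dec by (simp add: bd_def)
    next
      case False
      show ?thesis
      proof (cases "i < n")
        case True
        then have "M \<le> xs ! i" using xsS S_def by auto
        then show ?thesis using True False by (simp add: bd_def)
      next
        case False2: False
        then show ?thesis using False ij by (simp add: bd_def)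
      qed
    qed
  qed
  have bd_tail: "\<And>x. n \<le> x \<Longrightarrow> bd x + int x + 1 - t = 0" by (simp add: bd_def t_def)
  have nonneg: "\<And>x. 0 \<le> bd x + int x + 1 - t"
  proof -
    fix x
    have "bd (max x n) + int (max x n) \<le> bd x + int x" using strict_dec_gap[of bd x "max x n"] bd_dec by simp
    then show "0 \<le> bd x + int x + 1 - t" using bd_tail[of "max x n"] by simp
  qed
  have la_int: "\<And>x. int (la x) = bd x + int x + 1 - t" using nonneg by (simp add: la_def)
  have bead_eq: "bead t la = bd" by (rule ext) (simp add: bead_def la_int)
  have part: "is_partition la"
    unfolding is_partition_def
  proof
    show "\<forall>i j. i \<le> j \<longrightarrow> la j \<le> la i"
    proof (intro allI impI)
      fix i j :: nat assume "i \<le> j"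
      then have "bd j + int j \<le> bd i + int i" using strict_dec_gap[of bd i j] bd_dec by blast
      then show "la j \<le> la i" by (simp add: la_def nat_mono)
    qed
    have "{i. la i \<noteq> 0} \<subseteq> {..<n}"
    proof
      fix i assume "i \<in> {i. la i \<noteq> 0}"
      then have "\<not> n \<le> i" using bd_tail[of i] by (auto simp: la_def)
      then show "i \<in> {..<n}" by simp
    qed
    then show "finite {i. la i \<noteq> 0}" by (rule finite_subset) simp
  qed
  have "range bd = B"
  proof
    show "range bd \<subseteq> B"
    proof
      fix z assume "z \<in> range bd"
      then obtain x where x: "z = bd x" by auto
      show "z \<in> B"
      proof (cases "x < n")
        case True then show ?thesis using x xsS S_def by (auto simp: bd_def)
      next
        case False then show ?thesis using x low by (simp add: bd_def)
      qed
    qed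
    show "B \<subseteq> range bd"
    proof
      fix z assume z: "z \<in> B"
      show "z \<in> range bd"
      proof (cases "M \<le> z")
        case True
        then have "z \<in> set xs" using sxs z S_def by auto
        then obtain i where "i < n" "xs ! i = z" using lxs by (metis in_set_conv_nth)
        then show ?thesis by (metis bd_def rangeI)
      next
        case False
        define x where "x = n + nat (M - 1 - z)"
        have "bd x = z" using False by (simp add: bd_def x_def)
        then show ?thesis by (metis rangeI)
      qed
    qed
  qed
  then have "beta_set t la = B" by (simp add: beta_set_bead bead_eq)
  then show ?thesis using part by blast
qed

lemma Psi_props:
  assumes "\<forall>z<M. z \<in> uglov_beta e r lam s" "finite {b \<in> uglov_beta e r lam s. M \<le> b}"
  shows "is_partition (fst (uglov_Psi e r lam s)) \<and>
         beta_set (snd (uglov_Psi e r lam s)) (fst (uglov_Psi e r lam s)) = uglov_beta e r lam s"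
proof -
  let ?P = "\<lambda>p. is_partition (fst p) \<and> beta_set (snd p) (fst p) = uglov_beta e r lam s"
  obtain la t where "is_partition la" "beta_set t la = uglov_beta e r lam s"
    using beta_exists[OF assms] by blast
  then have ex: "?P (la, t)" by simp
  have "\<exists>!p. ?P p"
  proof (rule ex1I[of ?P])
    show "?P (la, t)" by (rule ex)
  next
    fix p assume "?P p"
    then show "p = (la, t)" using beta_unique[of "fst p" la "snd p" t] ex by (cases p) auto
  qed
  then show ?thesis unfolding uglov_Psi_def by (rule theI')
qed



lemma psi_decomp:
  fixes e r k :: nat and b :: int
  shows "uglov_psi e r k b = ((b div int e + 1) * int r - int k) * int e + b mod int e"
  by (simp add: uglov_psi_def)

lemma psi_divmod:
  fixes e r k :: nat and b :: int
  assumes "e > 0"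
  shows "uglov_psi e r k b div int e = (b div int e + 1) * int r - int k"
    "uglov_psi e r k b mod int e = b mod int e"
proof -
  have "uglov_psi e r k b = b mod int e + ((b div int e + 1) * int r - int k) * int e"
    by (simp add: uglov_psi_def)
  moreover have "b mod int e div int e = 0" using assms by simp
  ultimately show "uglov_psi e r k b div int e = (b div int e + 1) * int r - int k"
    "uglov_psi e r k b mod int e = b mod int e" using assms by simp_all
qed

lemma psi_fdiv:
  fixes e r k :: nat and b v :: int
  assumes "e > 0"
  shows "(uglov_psi e r k b - v) div int e = (b - v) div int e + (int r - 1) * (b div int e) + (int r - int k)"
proof -
  define q where "q = b div int e"
  define i where "i = b mod int e"
  have b: "b = q * int e + i" by (simp add: q_def i_def)
  have p: "uglov_psi e r k b - v = (i - v) + ((q + 1) * int r - int k) * int e"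
    by (simp add: uglov_psi_def q_def i_def)
  have bv: "b - v = (i - v) + q * int e" using b by simp
  have "(uglov_psi e r k b - v) div int e = (i - v) div int e + ((q + 1) * int r - int k)"
    unfolding p using assms by simp
  moreover have "(b - v) div int e = (i - v) div int e + q"
    unfolding bv using assms by simp
  ultimately show ?thesis by (simp add: q_def[symmetric] algebra_simps)
qed

lemma psi_ge:
  fixes e r k :: nat and a b :: int
  assumes "e > 0" "1 \<le> k" "k \<le> r"
  shows "a * int r * int e \<le> uglov_psi e r k b \<longleftrightarrow> a * int e \<le> b"
proof -
  define q where "q = b div int e"
  define i where "i = b mod int e"
  have i: "0 \<le> i" "i < int e" using assms by (simp_all add: i_def)
  have b: "b = q * int e + i" by (simp add: q_def i_def)
  have p: "uglov_psi e r k b = int r * int e * q + (int r - int k) * int e + i"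
    by (simp add: uglov_psi_def q_def i_def algebra_simps)
  have rk: "0 \<le> int r - int k" "int r - int k \<le> int r - 1" using assms by simp_all
  have ge1: "a * int r * int e \<le> uglov_psi e r k b \<longleftrightarrow> a * int r * int e \<le> int r * int e * q + (int r - int k) * int e + i"
    by (simp only: p)
  have ge2: "a * int e \<le> b \<longleftrightarrow> a * int e \<le> q * int e + i"
    by (subst b) (rule refl)
  have g: "a * int r * int e \<le> int r * int e * q + (int r - int k) * int e + i \<longleftrightarrow> a * int e \<le> q * int e + i"
  proof (cases "a \<le> q")
    case True
    have "a * int e \<le> q * int e" using True assms by (simp add: mult_right_mono)
    moreover have "int r * int e * a \<le> int r * int e * q" using True by (simp add: mult_left_mono)
    moreover have "0 \<le> (int r - int k) * int e" using rk by simp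
    moreover have "a * int r * int e = int r * int e * a" by simp
    ultimately show ?thesis using i by linarith
  next
    case False
    then have q: "q \<le> a - 1" by simp
    have "q * int e \<le> (a - 1) * int e" using q assms by (simp add: mult_right_mono)
    moreover have "int r * int e * q \<le> int r * int e * (a - 1)" using q by (simp add: mult_left_mono)
    moreover have "(int r - int k) * int e \<le> (int r - 1) * int e" using rk by (simp add: mult_right_mono)
    moreover have "a * int r * int e = int r * int e * a" by simp
    moreover have "(a - 1) * int e = a * int e - int e" by (simp add: algebra_simps)
    moreover have "int r * int e * (a - 1) = int r * int e * a - int r * int e" by (simp add: algebra_simps)
    moreover have "(int r - 1) * int e = int r * int e - int e" by (simp add: algebra_simps)
    ultimately show ?thesis using i by (smt (verit))
  qed
  show ?thesis using ge1 ge2 g by simp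
qed

lemma psi_inj:
  fixes e r k k' :: nat and b b' :: int
  assumes "e > 0" "1 \<le> k" "k \<le> r" "1 \<le> k'" "k' \<le> r" "uglov_psi e r k b = uglov_psi e r k' b'"
  shows "k = k' \<and> b = b'"
proof -
  define q where "q = b div int e"
  define q' where "q' = b' div int e"
  have m: "b mod int e = b' mod int e" using psi_divmod(2)[OF assms(1), of r k b] psi_divmod(2)[OF assms(1), of r k' b'] assms(6) by simp
  have d: "q * int r + (int r - int k) = q' * int r + (int r - int k')"
    using psi_divmod(1)[OF assms(1), of r k b] psi_divmod(1)[OF assms(1), of r k' b'] assms(6)
    by (simp add: q_def q'_def algebra_simps)
  have r0: "int r > 0" using assms by simp
  have "(q * int r + (int r - int k)) mod int r = (int r - int k) mod int r" by (rule mod_mult_self3)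
  also have "\<dots> = int r - int k" using assms by (intro mod_pos_pos_trivial) auto
  finally have m1: "(q * int r + (int r - int k)) mod int r = int r - int k" .
  have "(q' * int r + (int r - int k')) mod int r = (int r - int k') mod int r" by (rule mod_mult_self3)
  also have "\<dots> = int r - int k'" using assms by (intro mod_pos_pos_trivial) auto
  finally have m2: "(q' * int r + (int r - int k')) mod int r = int r - int k'" .
  from m1 m2
  have kk: "k = k'" using d by simp
  then have "q * int r = q' * int r" using d by simp
  then have "q = q'" using r0 by simp
  then have "b = b'" using m by (metis div_mult_mod_eq q_def q'_def)
  then show ?thesis using kk by simp
qed

lemma psi_surj:
  fixes e r :: nat and z :: int
  assumes "e > 0" "r \<ge> 1"
  shows "\<exists>k b. 1 \<le> k \<and> k \<le> r \<and> uglov_psi e r k b = z"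
proof -
  define A where "A = z div int e"
  define k where "k = r - nat (A mod int r)"
  define b where "b = (A div int r) * int e + z mod int e"
  have r0: "int r > 0" using assms by simp
  have am: "0 \<le> A mod int r" "A mod int r < int r" using r0 by simp_all
  have kk: "int k = int r - A mod int r" using am by (simp add: k_def)
  have bd: "b div int e = A div int r" using assms by (simp add: b_def)
  have bm: "b mod int e = z mod int e" using assms by (simp add: b_def)
  have "uglov_psi e r k b = ((A div int r + 1) * int r - int k) * int e + z mod int e"
    by (simp add: uglov_psi_def bd bm)
  also have "(A div int r + 1) * int r - int k = A"
  proof -
    have "(A div int r + 1) * int r = A div int r * int r + int r" by (simp add: ring_distribs)
    moreover have "A div int r * int r + A mod int r = A" by (rule div_mult_mod_eq)
    ultimately show ?thesis using kk by linarith
  qed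
  also have "A * int e + z mod int e = z" by (simp add: A_def)
  finally show ?thesis using kk am by (intro exI[of _ k] exI[of _ b]) auto
qed



lemma ug:
  fixes e r :: nat and a :: int and B :: "nat \<Rightarrow> int set" and g :: "int \<Rightarrow> int"
  assumes e: "e > 0" and r: "r \<ge> 1"
    and low: "\<forall>k<r. \<forall>z<a * int e. z \<in> B k"
    and fin: "\<forall>k<r. finite {b \<in> B k. a * int e \<le> b}"
  shows "\<forall>z < a * int r * int e. z \<in> (\<Union>k<r. uglov_psi e r (k+1) ` B k)"
    "finite {b \<in> (\<Union>k<r. uglov_psi e r (k+1) ` B k). a * int r * int e \<le> b}"
    "(\<Sum>b\<in>{b \<in> (\<Union>k<r. uglov_psi e r (k+1) ` B k). a * int r * int e \<le> b}. g b)
       = (\<Sum>k<r. \<Sum>b\<in>{b \<in> B k. a * int e \<le> b}. g (uglov_psi e r (k+1) b))"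
proof -
  show "\<forall>z < a * int r * int e. z \<in> (\<Union>k<r. uglov_psi e r (k+1) ` B k)"
  proof (intro allI impI)
    fix z assume z: "z < a * int r * int e"
    obtain k b where kb: "1 \<le> k" "k \<le> r" "uglov_psi e r k b = z" using psi_surj[OF e r] by blast
    have "\<not> a * int e \<le> b"
    proof
      assume "a * int e \<le> b"
      then have "a * int r * int e \<le> uglov_psi e r k b" using psi_ge[OF e kb(1) kb(2), of a b] by blast
      then show False using kb(3) z by linarith
    qed
    then have "b \<in> B (k - 1)" using low kb by simp
    moreover have kr: "k - 1 < r" "k - 1 + 1 = k" using kb by auto
    moreover have "z = uglov_psi e r (k - 1 + 1) b" using kr kb(3) by simp
    ultimately have "z \<in> uglov_psi e r (k - 1 + 1) ` B (k - 1)" by blast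
    then show "z \<in> (\<Union>k<r. uglov_psi e r (k+1) ` B k)" using kr by blast
  qed
  have eq: "{b \<in> (\<Union>k<r. uglov_psi e r (k+1) ` B k). a * int r * int e \<le> b}
        = (\<Union>k<r. uglov_psi e r (k+1) ` {b \<in> B k. a * int e \<le> b})"
    using psi_ge[OF e] by fastforce
  show "finite {b \<in> (\<Union>k<r. uglov_psi e r (k+1) ` B k). a * int r * int e \<le> b}"
    unfolding eq using fin by auto
  have disj: "\<forall>i\<in>{..<r}. \<forall>j\<in>{..<r}. i \<noteq> j \<longrightarrow>
      uglov_psi e r (i+1) ` {b \<in> B i. a * int e \<le> b} \<inter> uglov_psi e r (j+1) ` {b \<in> B j. a * int e \<le> b} = {}"
  proof (intro ballI impI)
    fix i j assume ij: "i \<in> {..<r}" "j \<in> {..<r}" "i \<noteq> j"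
    show "uglov_psi e r (i+1) ` {b \<in> B i. a * int e \<le> b} \<inter> uglov_psi e r (j+1) ` {b \<in> B j. a * int e \<le> b} = {}"
    proof (rule ccontr)
      assume "\<not> ?thesis"
      then obtain b b' where "uglov_psi e r (i+1) b = uglov_psi e r (j+1) b'" by blast
      then have "i + 1 = j + 1" using psi_inj[OF e, of "i+1" r "j+1" b b'] ij by simp
      then show False using ij by simp
    qed
  qed
  have "(\<Sum>b\<in>{b \<in> (\<Union>k<r. uglov_psi e r (k+1) ` B k). a * int r * int e \<le> b}. g b)
      = (\<Sum>k<r. \<Sum>b\<in>uglov_psi e r (k+1) ` {b \<in> B k. a * int e \<le> b}. g b)"
    unfolding eq by (rule sum.UNION_disjoint) (use fin disj in auto)
  also have "\<dots> = (\<Sum>k<r. \<Sum>b\<in>{b \<in> B k. a * int e \<le> b}. g (uglov_psi e r (k+1) b))"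
  proof (rule sum.cong[OF refl])
    fix k assume k: "k \<in> {..<r}"
    have "inj_on (uglov_psi e r (k+1)) {b \<in> B k. a * int e \<le> b}"
      using psi_inj[OF e, of "k+1" r "k+1"] k by (auto simp: inj_on_def)
    then show "(\<Sum>b\<in>uglov_psi e r (k+1) ` {b \<in> B k. a * int e \<le> b}. g b) = (\<Sum>b\<in>{b \<in> B k. a * int e \<le> b}. g (uglov_psi e r (k+1) b))"
      by (rule sum.reindex_cong) auto
  qed
  finally show "(\<Sum>b\<in>{b \<in> (\<Union>k<r. uglov_psi e r (k+1) ` B k). a * int r * int e \<le> b}. g b)
       = (\<Sum>k<r. \<Sum>b\<in>{b \<in> B k. a * int e \<le> b}. g (uglov_psi e r (k+1) b))" .
qed

lemma shift_sum:
  fixes g :: "int \<Rightarrow> int"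
  assumes "\<forall>z<M. z \<in> U" "finite {b \<in> U. M \<le> b}" "M' \<le> M"
  shows "finite {b \<in> U. M' \<le> b}" "(\<Sum>b\<in>{b \<in> U. M' \<le> b}. g b) = (\<Sum>b\<in>{b \<in> U. M \<le> b}. g b) + (\<Sum>b\<in>{M'..<M}. g b)"
proof -
  have eq: "{b \<in> U. M' \<le> b} = {b \<in> U. M \<le> b} \<union> {M'..<M}" using assms by auto
  show "finite {b \<in> U. M' \<le> b}" unfolding eq using assms by simp
  show "(\<Sum>b\<in>{b \<in> U. M' \<le> b}. g b) = (\<Sum>b\<in>{b \<in> U. M \<le> b}. g b) + (\<Sum>b\<in>{M'..<M}. g b)"
    unfolding eq by (rule sum.union_disjoint) (use assms in auto)
qed

lemma comp:
  fixes e :: nat and v t M :: int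
  assumes "e > 0" "0 \<le> v" "v < int e" "is_partition la" "\<forall>x\<ge>X. la x = 0" "M \<le> t - int X"
  shows "(\<Sum>b\<in>{b \<in> beta_set t la. M \<le> b}. (b - v) div int e)
    = (\<Sum>b\<in>{M..<t}. (b - v) div int e)
      + (\<Sum>x<X. int (card {y. 1 \<le> y \<and> y \<le> la x \<and> (t + int y - int (x+1)) mod int e = v}))"
proof -
  have row: "int (card {y. 1 \<le> y \<and> y \<le> la x \<and> (t + int y - int (x+1)) mod int e = v})
      = (bead t la x - v) div int e - (t - int x - 1 - v) div int e" for x
  proof -
    have "{y. 1 \<le> y \<and> y \<le> la x \<and> (t + int y - int (x+1)) mod int e = v}
        = {y. 1 \<le> y \<and> y \<le> la x \<and> ((t - int (x+1)) + int y) mod int e = v}"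
      by (rule Collect_cong) (simp add: algebra_simps)
    then show ?thesis using rowcnt[OF assms(1-3), where A="t - int (x+1)" and L="la x"]
      by (simp add: bead_def algebra_simps)
  qed
  show ?thesis
    unfolding sum_upper(2)[OF assms(4-6)] sum_ref[OF assms(6)] row sum_subtractf by simp
qed

lemma rescount:
  assumes "\<forall>k<m. \<forall>x\<ge>X. lam k x = 0"
  shows "int (count (residues e m lam s) v)
     = (\<Sum>k<m. \<Sum>x<X. int (card {y. 1 \<le> y \<and> y \<le> lam k x \<and> (s k + int y - int (x+1)) mod int e = v}))"
proof -
  have "finite {n \<in> nodes m lam. True}" by (rule nodes_count(2)[OF assms])
  then have fin: "finite (nodes m lam)" by simp
  show ?thesis
    unfolding count_res[OF fin] nodes_count(1)[OF assms] by simp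
qed

lemma multi_bound:
  assumes "is_multipartition r lam" shows "\<exists>X. \<forall>k<r. \<forall>x\<ge>X. lam k x = 0"
  using assms
proof (induction r)
  case 0 then show ?case by simp
next
  case (Suc r)
  then have "is_multipartition r lam" by (simp add: is_multipartition_def)
  then obtain X where X: "\<forall>k<r. \<forall>x\<ge>X. lam k x = 0" using Suc.IH by blast
  have "is_partition (lam r)" using Suc.prems by (simp add: is_multipartition_def)
  then obtain X' where X': "\<forall>x\<ge>X'. lam r x = 0" using part_bound by blast
  have "\<forall>k<Suc r. \<forall>x\<ge>X + X'. lam k x = 0" using X X' by (auto simp: less_Suc_eq)
  then show ?case by blast
qed



lemma psi_sum:
  fixes e r :: nat and a v :: int
  assumes e: "e > 0" and mp: "is_multipartition r lam" and X: "\<forall>k<r. \<forall>x\<ge>X. lam k x = 0"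
    and aM: "\<forall>k<r. a * int e \<le> s k - int X" and v: "0 \<le> v" "v < int e"
  shows "(\<Sum>k<r. \<Sum>b\<in>{b \<in> beta_set (s k) (lam k). a * int e \<le> b}. (uglov_psi e r (k+1) b - v) div int e)
   = (\<Sum>k<r. (\<Sum>b\<in>{a * int e..<s k}. (b - v) div int e) + (int r - 1) * (\<Sum>b\<in>{a * int e..<s k}. (b - 0) div int e) + (int r - int (k+1)) * (s k - a * int e))
     + int (count (residues e r lam s) v) + (int r - 1) * int (count (residues e r lam s) 0)"
proof -
  define cnt where "cnt = (\<lambda>k w. (\<Sum>x<X. int (card {y. 1 \<le> y \<and> y \<le> lam k x \<and> (s k + int y - int (x+1)) mod int e = w})))"
  define Ref where "Ref = (\<lambda>k. (\<Sum>b\<in>{a * int e..<s k}. (b - v) div int e) + (int r - 1) * (\<Sum>b\<in>{a * int e..<s k}. (b - 0) div int e) + (int r - int (k+1)) * (s k - a * int e))"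
  have per: "(\<Sum>b\<in>{b \<in> beta_set (s k) (lam k). a * int e \<le> b}. (uglov_psi e r (k+1) b - v) div int e)
      = Ref k + cnt k v + (int r - 1) * cnt k 0" if k: "k < r" for k
  proof -
    let ?S = "{b \<in> beta_set (s k) (lam k). a * int e \<le> b}"
    have pk: "is_partition (lam k)" using mp k by (simp add: is_multipartition_def)
    have Xk: "\<forall>x\<ge>X. lam k x = 0" using X k by simp
    have Mk: "a * int e \<le> s k - int X" using aM k by simp
    have "(\<Sum>b\<in>?S. (uglov_psi e r (k+1) b - v) div int e)
        = (\<Sum>b\<in>?S. (b - v) div int e + (int r - 1) * ((b - 0) div int e) + (int r - int (k+1)))"
      by (rule sum.cong[OF refl]) (simp add: psi_fdiv[OF e])
    also have "\<dots> = (\<Sum>b\<in>?S. (b - v) div int e) + (int r - 1) * (\<Sum>b\<in>?S. (b - 0) div int e) + (int r - int (k+1)) * int (card ?S)"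
      by (simp add: sum.distrib sum_distrib_left)
    also have "int (card ?S) = s k - a * int e" by (rule card_upper[OF pk Xk Mk])
    also have "(\<Sum>b\<in>?S. (b - v) div int e) = (\<Sum>b\<in>{a * int e..<s k}. (b - v) div int e) + cnt k v"
      unfolding cnt_def by (rule comp[OF e v pk Xk Mk])
    also have "(\<Sum>b\<in>?S. (b - 0) div int e) = (\<Sum>b\<in>{a * int e..<s k}. (b - 0) div int e) + cnt k 0"
      unfolding cnt_def by (rule comp[OF e _ _ pk Xk Mk]) (use e in simp_all)
    finally show ?thesis by (simp add: Ref_def algebra_simps)
  qed
  have "(\<Sum>k<r. \<Sum>b\<in>{b \<in> beta_set (s k) (lam k). a * int e \<le> b}. (uglov_psi e r (k+1) b - v) div int e)
      = (\<Sum>k<r. Ref k + cnt k v + (int r - 1) * cnt k 0)"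
  proof (rule sum.cong[OF refl])
    fix k assume "k \<in> {..<r}"
    then show "(\<Sum>b\<in>{b \<in> beta_set (s k) (lam k). a * int e \<le> b}. (uglov_psi e r (k+1) b - v) div int e)
      = Ref k + cnt k v + (int r - 1) * cnt k 0" by (intro per) simp
  qed
  also have "\<dots> = (\<Sum>k<r. Ref k) + (\<Sum>k<r. cnt k v) + (int r - 1) * (\<Sum>k<r. cnt k 0)"
    by (simp add: sum.distrib sum_distrib_left)
  also have "(\<Sum>k<r. cnt k v) = int (count (residues e r lam s) v)"
    unfolding cnt_def rescount[OF X] ..
  also have "(\<Sum>k<r. cnt k 0) = int (count (residues e r lam s) 0)"
    unfolding cnt_def rescount[OF X] ..
  finally show ?thesis by (simp add: Ref_def)
qed

lemma res_range:
  assumes "e > 0" "v \<in># residues e m lam s" shows "0 \<le> v \<and> v < int e"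
  using assms by (auto simp: residues_def)

lemma card_nodes1:
  assumes "\<forall>x\<ge>Y. la x = 0"
  shows "size (residues e 1 (\<lambda>_. la) t) = part_size la"
proof -
  have b: "\<forall>k<(1::nat). \<forall>x\<ge>Y. (\<lambda>_. la) k x = 0" using assms by simp
  have "size (residues e 1 (\<lambda>_. la) t) = card {n \<in> nodes 1 (\<lambda>_. la). True}" by (simp add: size_res)
  also have "\<dots> = (\<Sum>x<Y. card {y. 1 \<le> y \<and> y \<le> la x})" using nodes_count(1)[OF b, of "\<lambda>_. True"] by simp
  also have "\<dots> = (\<Sum>x<Y. la x)"
  proof (rule sum.cong[OF refl])
    fix x have "{y. 1 \<le> y \<and> y \<le> la x} = {1..la x}" by auto
    then show "card {y. 1 \<le> y \<and> y \<le> la x} = la x" by simp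
  qed
  also have "\<dots> = part_size la"
    unfolding part_size_def
  proof (rule sum.mono_neutral_right)
    show "{i. la i \<noteq> 0} \<subseteq> {..<Y}"
    proof
      fix i assume "i \<in> {i. la i \<noteq> 0}"
      then have "\<not> Y \<le> i" using assms by auto
      then show "i \<in> {..<Y}" by simp
    qed
  qed auto
  finally show ?thesis .
qed



theorem proposition2p8:
  fixes e r :: nat and lam mu :: "nat \<Rightarrow> nat \<Rightarrow> nat" and s :: "nat \<Rightarrow> int"
  assumes "e \<ge> 2" and "r \<ge> 1"
    and "is_multipartition r lam" and "is_multipartition r mu"
    and "block_equiv e r (lam, s) (mu, s)"
  shows "block_equiv e 1 (as_single (uglov_Psi e r lam s)) (as_single (uglov_Psi e r mu s))"
proof -
  have e: "e > 0" using assms(1) by simp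
  have r: "r \<ge> 1" by (rule assms(2))
  have res: "residues e r lam s = residues e r mu s" using assms(5) by (simp add: block_equiv_def)
  obtain Xl where Xl: "\<forall>k<r. \<forall>x\<ge>Xl. lam k x = 0" using multi_bound[OF assms(3)] by blast
  obtain Xm where Xm: "\<forall>k<r. \<forall>x\<ge>Xm. mu k x = 0" using multi_bound[OF assms(4)] by blast
  define X where "X = Xl + Xm"
  have XL: "\<forall>k<r. \<forall>x\<ge>X. lam k x = 0" using Xl by (simp add: X_def)
  have XM: "\<forall>k<r. \<forall>x\<ge>X. mu k x = 0" using Xm by (simp add: X_def)
  define a where "a = - (\<Sum>k<r. \<bar>s k\<bar>) - int X - 1"
  have aM: "\<forall>k<r. a * int e \<le> s k - int X"
  proof (intro allI impI)
    fix k assume k: "k < r"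
    have "\<bar>s k\<bar> \<le> (\<Sum>k<r. \<bar>s k\<bar>)" by (rule member_le_sum) (use k in auto)
    then have "a \<le> s k - int X" by (simp add: a_def)
    moreover have "a * int e \<le> a * 1"
    proof (rule mult_left_mono_neg)
      have "0 \<le> (\<Sum>k<r. \<bar>s k\<bar>)" by (rule sum_nonneg) simp
      then show "a \<le> 0" unfolding a_def by linarith
      show "1 \<le> int e" using e by simp
    qed
    ultimately show "a * int e \<le> s k - int X" by simp
  qed
  have gen: "(\<forall>z < a * int r * int e. z \<in> uglov_beta e r L s)
      \<and> finite {b \<in> uglov_beta e r L s. a * int r * int e \<le> b}
      \<and> (\<forall>g::int \<Rightarrow> int. (\<Sum>b\<in>{b \<in> uglov_beta e r L s. a * int r * int e \<le> b}. g b)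
          = (\<Sum>k<r. \<Sum>b\<in>{b \<in> beta_set (s k) (L k). a * int e \<le> b}. g (uglov_psi e r (k+1) b)))"
    if mpL: "is_multipartition r L" and XLL: "\<forall>k<r. \<forall>x\<ge>X. L k x = 0" for L
  proof -
    have low: "\<forall>k<r. \<forall>z<a * int e. z \<in> beta_set (s k) (L k)"
    proof (intro allI impI)
      fix k z assume k: "k < r" and z: "z < a * int e"
      have "z < s k - int X" using z aM k by force
      then show "z \<in> beta_set (s k) (L k)" using beta_low[of X "L k" z "s k"] XLL k by blast
    qed
    have fin: "\<forall>k<r. finite {b \<in> beta_set (s k) (L k). a * int e \<le> b}"
    proof (intro allI impI)
      fix k assume k: "k < r"
      have "is_partition (L k)" using mpL k by (simp add: is_multipartition_def)
      then show "finite {b \<in> beta_set (s k) (L k). a * int e \<le> b}"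
        using sum_upper(1)[of "L k" X "a * int e" "s k"] XLL aM k by blast
    qed
    show ?thesis unfolding uglov_beta_def
      apply (rule conjI, rule ug(1)[OF e r low fin])
      apply (rule conjI, rule ug(2)[OF e r low fin])
      apply (rule allI, rule ug(3)[OF e r low fin])
      done
  qed
  note gL = gen[OF assms(3) XL] and gM = gen[OF assms(4) XM]
  obtain la1 t1 where p1: "uglov_Psi e r lam s = (la1, t1)" by (cases "uglov_Psi e r lam s")
  obtain la2 t2 where p2: "uglov_Psi e r mu s = (la2, t2)" by (cases "uglov_Psi e r mu s")
  have P1: "is_partition la1" "beta_set t1 la1 = uglov_beta e r lam s"
    using Psi_props[of "a * int r * int e" e r lam s] gL p1 by auto
  have P2: "is_partition la2" "beta_set t2 la2 = uglov_beta e r mu s"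
    using Psi_props[of "a * int r * int e" e r mu s] gM p2 by auto
  obtain Y1 where Y1: "\<forall>x\<ge>Y1. la1 x = 0" using part_bound[OF P1(1)] by blast
  obtain Y2 where Y2: "\<forall>x\<ge>Y2. la2 x = 0" using part_bound[OF P2(1)] by blast
  define Y where "Y = Y1 + Y2"
  have YY1: "\<forall>x\<ge>Y. la1 x = 0" using Y1 by (simp add: Y_def)
  have YY2: "\<forall>x\<ge>Y. la2 x = 0" using Y2 by (simp add: Y_def)
  define M where "M = min (a * int r * int e) (min t1 t2 - int Y)"
  have M1: "M \<le> t1 - int Y" and M2: "M \<le> t2 - int Y" and M0: "M \<le> a * int r * int e"
    by (auto simp: M_def)
  have shiftL: "(\<Sum>b\<in>{b \<in> uglov_beta e r lam s. M \<le> b}. g b)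
     = (\<Sum>k<r. \<Sum>b\<in>{b \<in> beta_set (s k) (lam k). a * int e \<le> b}. g (uglov_psi e r (k+1) b)) + (\<Sum>b\<in>{M..<a * int r * int e}. g b)"
    for g :: "int \<Rightarrow> int"
    using shift_sum(2)[of "a * int r * int e" "uglov_beta e r lam s" M g] gL M0 by simp
  have shiftM: "(\<Sum>b\<in>{b \<in> uglov_beta e r mu s. M \<le> b}. g b)
     = (\<Sum>k<r. \<Sum>b\<in>{b \<in> beta_set (s k) (mu k). a * int e \<le> b}. g (uglov_psi e r (k+1) b)) + (\<Sum>b\<in>{M..<a * int r * int e}. g b)"
    for g :: "int \<Rightarrow> int"
    using shift_sum(2)[of "a * int r * int e" "uglov_beta e r mu s" M g] gM M0 by simp
  have cardcomp: "(\<Sum>k<r. \<Sum>b\<in>{b \<in> beta_set (s k) (L k). a * int e \<le> b}. (1::int))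
      = (\<Sum>k<r. s k - a * int e)"
    if "is_multipartition r L" "\<forall>k<r. \<forall>x\<ge>X. L k x = 0" for L
  proof (rule sum.cong[OF refl])
    fix k assume k: "k \<in> {..<r}"
    have "is_partition (L k)" using that k by (simp add: is_multipartition_def)
    then show "(\<Sum>b\<in>{b \<in> beta_set (s k) (L k). a * int e \<le> b}. (1::int)) = s k - a * int e"
      using card_upper[of "L k" X "a * int e" "s k"] that k aM by simp
  qed
  have tL: "t1 - M = (\<Sum>k<r. s k - a * int e) + (a * int r * int e - M)"
  proof -
    have "t1 - M = int (card {b \<in> beta_set t1 la1. M \<le> b})" using card_upper[OF P1(1) YY1 M1] by simp
    also have "\<dots> = (\<Sum>b\<in>{b \<in> uglov_beta e r lam s. M \<le> b}. (1::int))" using P1(2) by simp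
    also have "\<dots> = (\<Sum>k<r. s k - a * int e) + (a * int r * int e - M)"
      using shiftL[of "\<lambda>_. 1"] cardcomp[OF assms(3) XL] M0 by simp
    finally show ?thesis .
  qed
  have tM: "t2 - M = (\<Sum>k<r. s k - a * int e) + (a * int r * int e - M)"
  proof -
    have "t2 - M = int (card {b \<in> beta_set t2 la2. M \<le> b})" using card_upper[OF P2(1) YY2 M2] by simp
    also have "\<dots> = (\<Sum>b\<in>{b \<in> uglov_beta e r mu s. M \<le> b}. (1::int))" using P2(2) by simp
    also have "\<dots> = (\<Sum>k<r. s k - a * int e) + (a * int r * int e - M)"
      using shiftM[of "\<lambda>_. 1"] cardcomp[OF assms(4) XM] M0 by simp
    finally show ?thesis .
  qed
  have tt: "t1 = t2" using tL tM by simp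
  define cnt where "cnt = (\<lambda>la t v. (\<Sum>x<Y. int (card {y. 1 \<le> y \<and> y \<le> la x \<and> (t + int y - int (x+1)) mod int e = v})))"
  have cnteq: "cnt la1 t1 v = cnt la2 t2 v" if v: "0 \<le> v" "v < int e" for v
  proof -
    have "(\<Sum>b\<in>{M..<t1}. (b - v) div int e) + cnt la1 t1 v
        = (\<Sum>b\<in>{b \<in> beta_set t1 la1. M \<le> b}. (b - v) div int e)"
      unfolding cnt_def by (rule comp[OF e v P1(1) YY1 M1, symmetric])
    also have "\<dots> = (\<Sum>k<r. \<Sum>b\<in>{b \<in> beta_set (s k) (lam k). a * int e \<le> b}. (uglov_psi e r (k+1) b - v) div int e) + (\<Sum>b\<in>{M..<a * int r * int e}. (b - v) div int e)"
      unfolding P1(2) by (rule shiftL)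
    also have "(\<Sum>k<r. \<Sum>b\<in>{b \<in> beta_set (s k) (lam k). a * int e \<le> b}. (uglov_psi e r (k+1) b - v) div int e)
       = (\<Sum>k<r. \<Sum>b\<in>{b \<in> beta_set (s k) (mu k). a * int e \<le> b}. (uglov_psi e r (k+1) b - v) div int e)"
      unfolding psi_sum[OF e assms(3) XL aM v] psi_sum[OF e assms(4) XM aM v] res ..
    also have "(\<Sum>k<r. \<Sum>b\<in>{b \<in> beta_set (s k) (mu k). a * int e \<le> b}. (uglov_psi e r (k+1) b - v) div int e) + (\<Sum>b\<in>{M..<a * int r * int e}. (b - v) div int e)
       = (\<Sum>b\<in>{b \<in> beta_set t2 la2. M \<le> b}. (b - v) div int e)"
      unfolding P2(2) by (rule shiftM[symmetric])
    also have "\<dots> = (\<Sum>b\<in>{M..<t2}. (b - v) div int e) + cnt la2 t2 v"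
      unfolding cnt_def by (rule comp[OF e v P2(1) YY2 M2])
    finally show ?thesis using tt by simp
  qed
  have YB1: "\<forall>k<(1::nat). \<forall>x\<ge>Y. (\<lambda>_. la1) k x = 0" using YY1 by simp
  have YB2: "\<forall>k<(1::nat). \<forall>x\<ge>Y. (\<lambda>_. la2) k x = 0" using YY2 by simp
  have reseq: "residues e 1 (\<lambda>_. la1) (\<lambda>_. t1) = residues e 1 (\<lambda>_. la2) (\<lambda>_. t2)"
  proof (rule multiset_eqI)
    fix v
    show "count (residues e 1 (\<lambda>_. la1) (\<lambda>_. t1)) v = count (residues e 1 (\<lambda>_. la2) (\<lambda>_. t2)) v"
    proof (cases "0 \<le> v \<and> v < int e")
      case True
      have "int (count (residues e 1 (\<lambda>_. la1) (\<lambda>_. t1)) v) = cnt la1 t1 v"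
        unfolding rescount[OF YB1] cnt_def by simp
      also have "\<dots> = cnt la2 t2 v" using cnteq True by simp
      also have "\<dots> = int (count (residues e 1 (\<lambda>_. la2) (\<lambda>_. t2)) v)"
        unfolding rescount[OF YB2] cnt_def by simp
      finally show ?thesis by simp
    next
      case False
      then have "v \<notin># residues e 1 (\<lambda>_. la1) (\<lambda>_. t1)" "v \<notin># residues e 1 (\<lambda>_. la2) (\<lambda>_. t2)"
        using res_range[OF e] by blast+
      then show ?thesis by (simp add: not_in_iff)
    qed
  qed
  have sz: "part_size la1 = part_size la2"
    using card_nodes1[OF YY1, of e "\<lambda>_. t1"] card_nodes1[OF YY2, of e "\<lambda>_. t2"] reseq by simp
  show ?thesis
    unfolding p1 p2 as_single_def block_equiv_def
    using P1(1) P2(1) tt sz reseq by (simp add: is_multipartition_def multi_size_def)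
qed


end
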